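(* Let $p:\mathbb{R}\times\mathbb{R}\to\mathbb{R}$ be measurable with: (1) $p_{\alpha,\beta}>0$ almost everywhere; (2) $p_{\alpha,\beta}=p_{\beta,\alpha}$; (3) $p_{\alpha,\beta}$ is $\pi$-periodic in both arguments; (4) $p$ is essentially bounded. If $\gamma\in B^\infty_{\rm ap}(\mathbb{R},\mathbb{R}^2)$ maximizes $\omega_p$ over $B^\infty_{\rm ap}(\mathbb{R},\mathbb{R}^2)$, then $|\gamma(\alpha)|=1$ for almost all $\alpha$.
   Context: For $v,w\in\mathbb{R}^2$, $v\times w=v_1w_2-v_2w_1$. $L^\infty_{\rm ap}(\mathbb{R},\mathbb{R}^2)$ is the space of essentially bounded measurable $\gamma:\mathbb{R}\to\mathbb{R}^2$ with $\gamma(\alpha+\pi)=-\gamma(\alpha)$. $B^\infty_{\rm ap}(\mathbb{R},\mathbb{R}^2)$ is its subset with $\|\gamma_1^2+\gamma_2^2\|_\infty\le1$. For such $\gamma$, \[ \omega_p(\gamma)=\int_0^\pi\int_\alpha^\pi p_{\alpha,\beta}\,\gamma(\alpha)\times\gamma(\beta)\,d\beta\,d\alpha. \] *)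

theory Defs
  imports "HOL-Analysis.Analysis"
begin

definition cross2 :: "real \<times> real \<Rightarrow> real \<times> real \<Rightarrow> real" where
  "cross2 v w = fst v * snd w - snd v * fst w"

definition Linf_ap :: "(real \<Rightarrow> real \<times> real) set" where
  "Linf_ap = {\<gamma>. \<gamma> \<in> borel_measurable lebesgue
      \<and> (\<exists>C. AE \<alpha> in lebesgue. norm (\<gamma> \<alpha>) \<le> C)
      \<and> (AE \<alpha> in lebesgue. \<gamma> (\<alpha> + pi) = - \<gamma> \<alpha>)}"

definition Binf_ap :: "(real \<Rightarrow> real \<times> real) set" where
  "Binf_ap = {\<gamma> \<in> Linf_ap. AE \<alpha> in lebesgue. (fst (\<gamma> \<alpha>))\<^sup>2 + (snd (\<gamma> \<alpha>))\<^sup>2 \<le> 1}"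

definition omega :: "(real \<times> real \<Rightarrow> real) \<Rightarrow> (real \<Rightarrow> real \<times> real) \<Rightarrow> real" where
  "omega p \<gamma> = (LINT \<alpha>:{0..pi}|lebesgue.
       (LINT \<beta>:{\<alpha>..pi}|lebesgue. p (\<alpha>, \<beta>) * cross2 (\<gamma> \<alpha>) (\<gamma> \<beta>)))"

end

theory Submission
  imports Defs
begin

lemma sigma_finite_lebesgue: "sigma_finite_measure (lebesgue :: 'a::euclidean_space measure)"
proof
  have fin: "\<And>n. emeasure lborel (cball (0::'a) (real n)) \<noteq> top"
    using emeasure_bounded_finite[OF bounded_cball] by (metis infinity_ennreal_def less_irrefl)
  show "\<exists>A. countable A \<and> A \<subseteq> sets (lebesgue::'a measure) \<and> \<Union> A = space lebesgue \<and> (\<forall>a\<in>A. emeasure lebesgue a \<noteq> \<infinity>)"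
    by (intro exI[of _ "range (\<lambda>n::nat. cball (0::'a) (real n))"])
       (auto simp: emeasure_completion real_arch_simple dist_norm fin intro: exI[of _ "nat \<lceil>norm _\<rceil>"])
qed

lemma ae_meas_lebesgue:
  fixes f g :: "'a::euclidean_space \<Rightarrow> real"
  assumes f: "f \<in> borel_measurable lebesgue" and ae: "AE x in lebesgue. g x = f x"
  shows "g \<in> borel_measurable lebesgue"
proof (rule measurableI)
  fix A :: "real set" assume A: "A \<in> sets borel"
  show "g -` A \<inter> space lebesgue \<in> sets lebesgue"
  proof (rule completion.in_sets_AE[where A = "f -` A \<inter> space lebesgue"])
    show "AE x in lebesgue. (x \<in> f -` A \<inter> space lebesgue) = (x \<in> g -` A \<inter> space lebesgue)"
      using ae by eventually_elim auto
    show "f -` A \<inter> space lebesgue \<in> sets lebesgue" using f A by (rule measurable_sets)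
  qed auto
qed auto

lemma AE_translate:
  assumes "AE x in lebesgue. Q (x::real)"
  shows "AE x in lebesgue. Q (x + c)"
proof -
  obtain N where N: "N \<in> null_sets lebesgue" "{x \<in> space lebesgue. \<not> Q x} \<subseteq> N"
    using assms unfolding eventually_ae_filter by auto
  have "negligible ((+) (-c) ` N)" using N(1) negligible_translation negligible_iff_null_sets by blast
  hence "(+) (-c) ` N \<in> null_sets lebesgue" using negligible_iff_null_sets by blast
  moreover have "{x \<in> space lebesgue. \<not> Q (x + c)} \<subseteq> (+) (-c) ` N"
    using N(2) by (auto intro!: image_eqI[where x="_ + c"])
  ultimately show ?thesis by (rule AE_I')
qed

lemma cross2_bound: "\<bar>cross2 v w\<bar> \<le> norm v * norm w"
proof -
  obtain a b c d where v: "v = (a,b)" and w: "w = (c,d)" by (cases v, cases w)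
  have "(a*d - b*c)^2 \<le> (a^2+b^2)*(c^2+d^2)"
  proof -
    have "(a*d - b*c)^2 + (a*c+b*d)^2 = (a^2+b^2)*(c^2+d^2)" by algebra
    thus ?thesis by (smt (verit) zero_le_power2)
  qed
  hence "sqrt ((a*d - b*c)^2) \<le> sqrt (a^2+b^2) * sqrt (c^2+d^2)"
    by (metis real_sqrt_le_mono real_sqrt_mult)
  thus ?thesis by (simp add: v w cross2_def norm_Pair)
qed


lemma q_meas_pair:
  fixes q :: "real \<times> real \<Rightarrow> real"
  assumes q: "q \<in> borel_measurable borel"
  shows "q \<in> borel_measurable (lebesgue \<Otimes>\<^sub>M lebesgue)"
proof -
  have id: "(\<lambda>z. (fst z, snd z)) \<in> (lebesgue \<Otimes>\<^sub>M lebesgue) \<rightarrow>\<^sub>M (borel \<Otimes>\<^sub>M borel :: (real \<times> real) measure)"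
    by (intro measurable_Pair measurable_compose[OF measurable_fst measurable_completion]
        measurable_compose[OF measurable_snd measurable_completion]) (simp_all add: measurable_lborel1)
  have "q \<in> borel_measurable (borel \<Otimes>\<^sub>M borel)" using q by (simp add: borel_prod)
  from measurable_compose[OF id this] show ?thesis by simp
qed

lemma omega_fubini:
  fixes p q :: "real \<times> real \<Rightarrow> real" and f :: "real \<Rightarrow> real \<times> real"
  assumes q: "q \<in> borel_measurable borel" and qb: "\<And>x. \<bar>q x\<bar> \<le> C"
    and pq: "AE \<alpha> in lebesgue. AE \<beta> in lebesgue. p (\<alpha>, \<beta>) = q (\<alpha>, \<beta>)"
    and f: "f \<in> borel_measurable lebesgue" and fb: "AE \<alpha> in lebesgue. norm (f \<alpha>) \<le> B"
  defines "K \<equiv> \<lambda>z. indicator {0..pi} (fst z) * indicator {fst z..pi} (snd z) * q z * cross2 (f (fst z)) (f (snd z))"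
  shows "integrable (lebesgue \<Otimes>\<^sub>M lebesgue) K \<and> omega p f = integral\<^sup>L (lebesgue \<Otimes>\<^sub>M lebesgue) K"
proof -
  interpret L: sigma_finite_measure "lebesgue :: real measure" by (rule sigma_finite_lebesgue)
  interpret P: pair_sigma_finite "lebesgue :: real measure" "lebesgue :: real measure" ..
  have qm[measurable]: "q \<in> borel_measurable (lebesgue \<Otimes>\<^sub>M lebesgue)" using q by (rule q_meas_pair)
  have fm[measurable]: "f \<in> borel_measurable lebesgue" by (rule f)
  have Kalt: "K = (\<lambda>z. of_bool (0 \<le> fst z \<and> fst z \<le> pi \<and> fst z \<le> snd z \<and> snd z \<le> pi) * q z *
     (fst (f (fst z)) * snd (f (snd z)) - snd (f (fst z)) * fst (f (snd z))))"
    by (auto simp: K_def fun_eq_iff cross2_def indicator_def)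
  have fstm[measurable]: "(\<lambda>z. fst z) \<in> borel_measurable (lebesgue \<Otimes>\<^sub>M lebesgue :: (real \<times> real) measure)"
    by (intro measurable_compose[OF measurable_fst measurable_completion]) (simp add: measurable_lborel1)
  have sndm[measurable]: "(\<lambda>z. snd z) \<in> borel_measurable (lebesgue \<Otimes>\<^sub>M lebesgue :: (real \<times> real) measure)"
    by (intro measurable_compose[OF measurable_snd measurable_completion]) (simp add: measurable_lborel1)
  have f1[measurable]: "(\<lambda>x. fst (f x)) \<in> borel_measurable lebesgue" "(\<lambda>x. snd (f x)) \<in> borel_measurable lebesgue"
  proof -
    have f'': "f \<in> lebesgue \<rightarrow>\<^sub>M (borel \<Otimes>\<^sub>M borel)" using f by (simp add: borel_prod)
    show "(\<lambda>x. fst (f x)) \<in> borel_measurable lebesgue" using measurable_compose[OF f'' measurable_fst] by (simp add: comp_def)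
    show "(\<lambda>x. snd (f x)) \<in> borel_measurable lebesgue" using measurable_compose[OF f'' measurable_snd] by (simp add: comp_def)
  qed
  have Km[measurable]: "K \<in> borel_measurable (lebesgue \<Otimes>\<^sub>M lebesgue)"
    unfolding Kalt by measurable
  let ?M = "lebesgue \<Otimes>\<^sub>M lebesgue :: (real \<times> real) measure"
  have sq: "{0..pi} \<times> {0..pi} \<in> sets ?M" by (auto intro: pair_measureI)
  have sqfin: "emeasure ?M ({0..pi} \<times> {0..pi}) < \<infinity>"
    by (subst L.emeasure_pair_measure_Times) (auto simp: emeasure_completion ennreal_mult_less_top)
  have bint: "integrable ?M (\<lambda>z. indicator ({0..pi} \<times> {0..pi}) z *\<^sub>R (C * (B * B)))"
    using sq sqfin by (rule integrable_indicator)
  have aeb: "AE z in ?M. norm (f (fst z)) \<le> B \<and> norm (f (snd z)) \<le> B"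
  proof (rule P.AE_pair_measure)
    show "{x \<in> space ?M. norm (f (fst x)) \<le> B \<and> norm (f (snd x)) \<le> B} \<in> sets ?M"
      by measurable
    show "AE x in lebesgue. AE y in lebesgue. norm (f (fst (x, y))) \<le> B \<and> norm (f (snd (x, y))) \<le> B"
      using fb by eventually_elim (use fb in auto)
  qed
  have Kint: "integrable ?M K"
  proof (rule Bochner_Integration.integrable_bound[OF bint Km])
    show "AE z in ?M. norm (K z) \<le> norm (indicator ({0..pi} \<times> {0..pi}) z *\<^sub>R (C * (B * B)))"
      using aeb
    proof eventually_elim
      case (elim z)
      obtain a b where z: "z = (a, b)" by (cases z)
      have B0: "0 \<le> B" using elim norm_ge_zero order_trans by blast
      have C0: "0 \<le> C" using qb[of z] by linarith
      have cb: "\<bar>cross2 (f a) (f b)\<bar> \<le> B * B"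
        using cross2_bound[of "f a" "f b"] elim z mult_mono[of "norm (f a)" B "norm (f b)" B] B0 by auto
      have "\<bar>q z * cross2 (f a) (f b)\<bar> \<le> C * (B * B)"
        using mult_mono[OF qb[of z] cb] C0 by (simp add: abs_mult)
      then show ?case using C0 B0 by (auto simp: K_def z indicator_def abs_mult)
    qed
  qed
  have meas_inner: "(\<lambda>\<beta>. K (\<alpha>, \<beta>)) \<in> borel_measurable lebesgue" for \<alpha>
    using measurable_compose[OF measurable_Pair1' Km, of \<alpha>] by simp
  have inner: "AE \<alpha> in lebesgue. indicator {0..pi} \<alpha> *\<^sub>R (LINT \<beta>:{\<alpha>..pi}|lebesgue. p (\<alpha>, \<beta>) * cross2 (f \<alpha>) (f \<beta>))
      = (\<integral>\<beta>. K (\<alpha>, \<beta>) \<partial>lebesgue)"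
    using pq
  proof eventually_elim
    case (elim \<alpha>)
    show ?case
    proof (cases "\<alpha> \<in> {0..pi}")
      case False
      then show ?thesis by (simp add: K_def)
    next
      case True
      have ae2: "AE \<beta> in lebesgue. indicator {\<alpha>..pi} \<beta> *\<^sub>R (p (\<alpha>, \<beta>) * cross2 (f \<alpha>) (f \<beta>)) = K (\<alpha>, \<beta>)"
        using elim by eventually_elim (use True in \<open>simp add: K_def\<close>)
      have m2: "(\<lambda>\<beta>. indicator {\<alpha>..pi} \<beta> *\<^sub>R (p (\<alpha>, \<beta>) * cross2 (f \<alpha>) (f \<beta>))) \<in> borel_measurable lebesgue"
        by (rule ae_meas_lebesgue[OF meas_inner ae2])
      show ?thesis using True integral_cong_AE[OF m2 meas_inner ae2]
        by (simp add: set_lebesgue_integral_def)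
    qed
  qed
  have meas_outer: "(\<lambda>\<alpha>. \<integral>\<beta>. K (\<alpha>, \<beta>) \<partial>lebesgue) \<in> borel_measurable lebesgue"
    by (rule L.borel_measurable_lebesgue_integral) (simp add: Km)
  have m1: "(\<lambda>\<alpha>. indicator {0..pi} \<alpha> *\<^sub>R (LINT \<beta>:{\<alpha>..pi}|lebesgue. p (\<alpha>, \<beta>) * cross2 (f \<alpha>) (f \<beta>))) \<in> borel_measurable lebesgue"
    by (rule ae_meas_lebesgue[OF meas_outer inner])
  have "omega p f = (\<integral>\<alpha>. \<integral>\<beta>. K (\<alpha>, \<beta>) \<partial>lebesgue \<partial>lebesgue)"
    unfolding omega_def set_lebesgue_integral_def[of _ "{0..pi}"]
    by (rule integral_cong_AE[OF m1 meas_outer inner])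
  also have "\<dots> = integral\<^sup>L ?M K" by (rule P.integral_fst'[OF Kint])
  finally show ?thesis using Kint by simp
qed


lemma lebesgue_ident[measurable]: "(\<lambda>x::real. x) \<in> borel_measurable lebesgue"
  by (rule measurable_completion) (simp add: measurable_lborel1)

lemma cover_nat: assumes "(0::real) \<le> x" shows "\<exists>n::nat. real n * pi \<le> x \<and> x \<le> (real n + 1) * pi"
proof -
  let ?n = "nat \<lfloor>x / pi\<rfloor>"
  have "0 \<le> x / pi" using assms by simp
  hence a: "real ?n = real_of_int \<lfloor>x / pi\<rfloor>" by simp
  have "real_of_int \<lfloor>x / pi\<rfloor> * pi \<le> x / pi * pi" "x / pi * pi \<le> (real_of_int \<lfloor>x / pi\<rfloor> + 1) * pi"
    by (intro mult_right_mono, linarith, simp)+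
  hence "real ?n * pi \<le> x \<and> x \<le> (real ?n + 1) * pi"
    unfolding a using pi_gt_zero by (simp add: field_simps)
  thus ?thesis by blast
qed

lemma periodic_AE:
  fixes P :: "real \<Rightarrow> bool"
  assumes base: "AE \<alpha> in lebesgue. \<alpha> \<in> {0..pi} \<longrightarrow> P \<alpha>"
    and D: "AE \<alpha> in lebesgue. P (\<alpha> + pi) = P \<alpha>"
  shows "AE \<alpha> in lebesgue. P \<alpha>"
proof -
  have S: "AE \<alpha> in lebesgue. \<alpha> \<in> {real n * pi .. (real n + 1) * pi} \<longrightarrow> P \<alpha>" for n :: nat
  proof (induction n)
    case 0 then show ?case using base by simp
  next
    case (Suc n)
    have t1: "AE \<alpha> in lebesgue. (\<alpha> + - pi) \<in> {real n * pi .. (real n + 1) * pi} \<longrightarrow> P (\<alpha> + - pi)"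
      by (rule AE_translate[OF Suc.IH])
    have t2: "AE \<alpha> in lebesgue. P (\<alpha> + - pi + pi) = P (\<alpha> + - pi)"
      by (rule AE_translate[OF D])
    show ?case using t1 t2 by eventually_elim (auto simp: algebra_simps)
  qed
  have T: "AE \<alpha> in lebesgue. \<alpha> \<in> {- (real n + 1) * pi .. - real n * pi} \<longrightarrow> P \<alpha>" for n :: nat
  proof (induction n)
    case 0
    have t1: "AE \<alpha> in lebesgue. (\<alpha> + pi) \<in> {0..pi} \<longrightarrow> P (\<alpha> + pi)"
      by (rule AE_translate[OF base])
    show ?case using t1 D by eventually_elim (auto simp: algebra_simps)
  next
    case (Suc n)
    have t1: "AE \<alpha> in lebesgue. (\<alpha> + pi) \<in> {- (real n + 1) * pi .. - real n * pi} \<longrightarrow> P (\<alpha> + pi)"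
      by (rule AE_translate[OF Suc.IH])
    show ?case using t1 D by eventually_elim (auto simp: algebra_simps)
  qed
  have "AE \<alpha> in lebesgue. \<forall>n::nat. (\<alpha> \<in> {real n * pi .. (real n + 1) * pi} \<longrightarrow> P \<alpha>) \<and>
      (\<alpha> \<in> {- (real n + 1) * pi .. - real n * pi} \<longrightarrow> P \<alpha>)"
    using S T by (simp add: AE_all_countable)
  then show ?thesis
  proof eventually_elim
    case (elim \<alpha>)
    show ?case
    proof (cases "0 \<le> \<alpha>")
      case True
      then obtain n where "real n * pi \<le> \<alpha> \<and> \<alpha> \<le> (real n + 1) * pi" using cover_nat by blast
      then show ?thesis using elim by auto
    next
      case False
      then obtain n where "real n * pi \<le> -\<alpha> \<and> -\<alpha> \<le> (real n + 1) * pi" using cover_nat[of "-\<alpha>"] by auto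
      then show ?thesis using elim[rule_format, of n] by (auto simp: algebra_simps)
    qed
  qed
qed


lemma norm_pair_sq: "norm (v::real\<times>real) = sqrt ((fst v)\<^sup>2 + (snd v)\<^sup>2)"
  by (cases v) (simp add: norm_Pair)

lemma norm_le1_iff: "norm (v::real\<times>real) \<le> 1 \<longleftrightarrow> (fst v)\<^sup>2 + (snd v)\<^sup>2 \<le> 1"
  by (simp add: norm_pair_sq)

theorem lemma4p3:
  fixes p :: "real \<times> real \<Rightarrow> real" and \<gamma> :: "real \<Rightarrow> real \<times> real"
  assumes p_meas: "p \<in> borel_measurable lebesgue"
    and p_pos: "AE x in lebesgue. p x > 0"
    and p_sym: "\<And>\<alpha> \<beta>. p (\<alpha>, \<beta>) = p (\<beta>, \<alpha>)"
    and p_per1: "\<And>\<alpha> \<beta>. p (\<alpha> + pi, \<beta>) = p (\<alpha>, \<beta>)"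
    and p_per2: "\<And>\<alpha> \<beta>. p (\<alpha>, \<beta> + pi) = p (\<alpha>, \<beta>)"
    and p_bdd: "\<exists>C. AE x in lebesgue. \<bar>p x\<bar> \<le> C"
    and \<gamma>_in: "\<gamma> \<in> Binf_ap"
    and \<gamma>_max: "\<forall>\<eta> \<in> Binf_ap. omega p \<eta> \<le> omega p \<gamma>"
  shows "AE \<alpha> in lebesgue. norm (\<gamma> \<alpha>) = 1"
proof (rule ccontr)
  assume notAE: "\<not> (AE \<alpha> in lebesgue. norm (\<gamma> \<alpha>) = 1)"
  interpret L: sigma_finite_measure "lebesgue :: real measure" by (rule sigma_finite_lebesgue)
  interpret P: pair_sigma_finite "lebesgue :: real measure" "lebesgue :: real measure" ..
  have LBi: "pair_sigma_finite (lborel :: real measure) (lborel :: real measure)"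
    by (simp add: pair_sigma_finite_def lborel.sigma_finite_measure_axioms)
  obtain C0 where C0: "AE x in lebesgue. \<bar>p x\<bar> \<le> C0" using p_bdd by blast
  define C where "C = max 0 C0"
  have C: "AE x in lebesgue. \<bar>p x\<bar> \<le> C" using C0 by eventually_elim (auto simp: C_def)
  have C_ge: "0 \<le> C" by (simp add: C_def)
  obtain q0 where q0: "q0 \<in> borel_measurable lborel" "AE x in lborel. p x = q0 x"
    using completion_ex_borel_measurable_real[OF p_meas] by blast
  define q where "q = (\<lambda>x. max 0 (min C (q0 x)))"
  have qm: "q \<in> borel_measurable borel"
    using q0(1) unfolding q_def by (simp add: measurable_lborel1)
  have qb: "\<And>x. \<bar>q x\<bar> \<le> C" "\<And>x. 0 \<le> q x"
    using C_ge by (auto simp: q_def)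
  have hq0: "AE x in lborel. p x = q x \<and> 0 < q x"
    using q0(2) C[unfolded AE_completion_iff] p_pos[unfolded AE_completion_iff]
    by eventually_elim (auto simp: q_def)
  have hq: "AE \<alpha> in lebesgue. AE \<beta> in lebesgue. p (\<alpha>, \<beta>) = q (\<alpha>, \<beta>) \<and> 0 < q (\<alpha>, \<beta>)"
  proof -
    have "AE x in (lborel \<Otimes>\<^sub>M lborel). p x = q x \<and> 0 < q x" using hq0 by (simp only: lborel_prod)
    from pair_sigma_finite.AE_pair[OF LBi this]
    have "AE \<alpha> in lborel. AE \<beta> in lborel. p (\<alpha>, \<beta>) = q (\<alpha>, \<beta>) \<and> 0 < q (\<alpha>, \<beta>)" by simp
    then show ?thesis unfolding AE_completion_iff .
  qed
  have \<gamma>m[measurable]: "\<gamma> \<in> borel_measurable lebesgue" and anti: "AE \<alpha> in lebesgue. \<gamma> (\<alpha> + pi) = - \<gamma> \<alpha>"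
    and g1: "AE \<alpha> in lebesgue. (fst (\<gamma> \<alpha>))\<^sup>2 + (snd (\<gamma> \<alpha>))\<^sup>2 \<le> 1"
    using \<gamma>_in by (auto simp: Binf_ap_def Linf_ap_def)
  have gn: "AE \<alpha> in lebesgue. norm (\<gamma> \<alpha>) \<le> 1" using g1 by eventually_elim (simp add: norm_le1_iff)
  define phi where "phi = (\<lambda>\<alpha>. max 0 (1 - norm (\<gamma> \<alpha>)))"
  define w where "w = (\<lambda>\<alpha>. (phi \<alpha> * cos \<alpha>, phi \<alpha> * sin \<alpha>))"
  have phim[measurable]: "phi \<in> borel_measurable lebesgue" unfolding phi_def by measurable
  have wm[measurable]: "w \<in> borel_measurable lebesgue" unfolding w_def by measurable
  have normw: "norm (w \<alpha>) = phi \<alpha>" for \<alpha>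
  proof -
    have "(phi \<alpha> * cos \<alpha>)\<^sup>2 + (phi \<alpha> * sin \<alpha>)\<^sup>2 = (phi \<alpha>)\<^sup>2 * ((sin \<alpha>)\<^sup>2 + (cos \<alpha>)\<^sup>2)"
      by algebra
    then show ?thesis by (simp add: w_def norm_Pair phi_def)
  qed
  have wb: "norm (w \<alpha>) \<le> 1" for \<alpha> by (simp add: normw phi_def)
  have eta_in: "(\<lambda>\<alpha>. \<gamma> \<alpha> + s *\<^sub>R w \<alpha>) \<in> Binf_ap" and eta_b: "AE \<alpha> in lebesgue. norm (\<gamma> \<alpha> + s *\<^sub>R w \<alpha>) \<le> 1"
    if s: "\<bar>s\<bar> \<le> 1" for s
  proof -
    show nb: "AE \<alpha> in lebesgue. norm (\<gamma> \<alpha> + s *\<^sub>R w \<alpha>) \<le> 1"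
      using gn
    proof eventually_elim
      case (elim \<alpha>)
      have "norm (\<gamma> \<alpha> + s *\<^sub>R w \<alpha>) \<le> norm (\<gamma> \<alpha>) + \<bar>s\<bar> * phi \<alpha>"
        using norm_triangle_ineq[of "\<gamma> \<alpha>" "s *\<^sub>R w \<alpha>"] by (simp add: normw phi_def)
      also have "\<dots> \<le> norm (\<gamma> \<alpha>) + phi \<alpha>" using s by (simp add: mult_left_le_one_le phi_def)
      also have "\<dots> = 1" using elim by (simp add: phi_def)
      finally show ?case .
    qed
    have ap: "AE \<alpha> in lebesgue. \<gamma> (\<alpha> + pi) + s *\<^sub>R w (\<alpha> + pi) = - (\<gamma> \<alpha> + s *\<^sub>R w \<alpha>)"
      using anti
    proof eventually_elim
      case (elim \<alpha>)
      have "phi (\<alpha> + pi) = phi \<alpha>" using elim by (simp add: phi_def)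
      then have "w (\<alpha> + pi) = - w \<alpha>" by (simp add: w_def)
      then show ?case using elim by simp
    qed
    have "(\<lambda>\<alpha>. \<gamma> \<alpha> + s *\<^sub>R w \<alpha>) \<in> borel_measurable lebesgue" by measurable
    then show "(\<lambda>\<alpha>. \<gamma> \<alpha> + s *\<^sub>R w \<alpha>) \<in> Binf_ap"
      using nb ap unfolding Binf_ap_def Linf_ap_def
      by (auto simp: norm_le1_iff[symmetric] intro!: exI[of _ 1])
  qed
  let ?M = "lebesgue \<Otimes>\<^sub>M lebesgue :: (real \<times> real) measure"
  define Kf where "Kf = (\<lambda>(f::real \<Rightarrow> real \<times> real) z. indicator {0..pi} (fst z) * indicator {fst z..pi} (snd z) * q z * cross2 (f (fst z)) (f (snd z)))"
  have pq: "AE \<alpha> in lebesgue. AE \<beta> in lebesgue. p (\<alpha>, \<beta>) = q (\<alpha>, \<beta>)"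
    using hq by (auto elim: eventually_mono)
  have fub: "integrable ?M (Kf f) \<and> omega p f = integral\<^sup>L ?M (Kf f)"
    if "f \<in> borel_measurable lebesgue" "AE \<alpha> in lebesgue. norm (f \<alpha>) \<le> 1" for f
    using omega_fubini[OF qm qb(1) pq that] unfolding Kf_def by simp
  define ep where "ep = (\<lambda>\<alpha>. \<gamma> \<alpha> + (1::real) *\<^sub>R w \<alpha>)"
  define em where "em = (\<lambda>\<alpha>. \<gamma> \<alpha> + (-1::real) *\<^sub>R w \<alpha>)"
  have Fg: "integrable ?M (Kf \<gamma>) \<and> omega p \<gamma> = integral\<^sup>L ?M (Kf \<gamma>)"
    by (rule fub[OF \<gamma>m gn])
  have Fw: "integrable ?M (Kf w) \<and> omega p w = integral\<^sup>L ?M (Kf w)"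
    by (rule fub[OF wm]) (simp add: wb)
  have Fp: "integrable ?M (Kf ep) \<and> omega p ep = integral\<^sup>L ?M (Kf ep)"
    unfolding ep_def by (rule fub[OF _ eta_b]) auto
  have Fm: "integrable ?M (Kf em) \<and> omega p em = integral\<^sup>L ?M (Kf em)"
    unfolding em_def by (rule fub[OF _ eta_b]) auto
  have ident: "Kf ep z + Kf em z = 2 * Kf \<gamma> z + 2 * Kf w z" for z
    by (simp add: Kf_def ep_def em_def cross2_def algebra_simps)
  have "omega p ep + omega p em = integral\<^sup>L ?M (\<lambda>z. Kf ep z + Kf em z)"
    using Fp Fm by (simp add: integral_add)
  also have "\<dots> = integral\<^sup>L ?M (\<lambda>z. 2 * Kf \<gamma> z + 2 * Kf w z)" by (simp add: ident)
  also have "\<dots> = 2 * omega p \<gamma> + 2 * omega p w"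
    using Fg Fw by (simp add: integral_add)
  finally have par: "omega p ep + omega p em = 2 * omega p \<gamma> + 2 * omega p w" .
  have "omega p ep \<le> omega p \<gamma>" "omega p em \<le> omega p \<gamma>"
    using \<gamma>_max eta_in[of 1] eta_in[of "-1"] by (auto simp: ep_def em_def)
  with par have wle: "integral\<^sup>L ?M (Kf w) \<le> 0" using Fw by linarith
  have crossw: "cross2 (w a) (w b) = phi a * phi b * sin (b - a)" for a b
    by (simp add: cross2_def w_def sin_diff algebra_simps)
  have Kw_nn: "0 \<le> Kf w z" for z
  proof -
    obtain a b where z: "z = (a, b)" by (cases z)
    have "0 \<le> phi a" "0 \<le> phi b" by (auto simp: phi_def)
    moreover have "0 \<le> sin (b - a)" if "0 \<le> a" "a \<le> b" "b \<le> pi"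
      using that by (intro sin_ge_zero) auto
    ultimately show ?thesis using qb(2)[of z]
      by (auto simp: Kf_def z crossw indicator_def)
  qed
  have "integral\<^sup>L ?M (Kf w) = 0"
    using wle integral_nonneg_AE[OF AE_I2[OF Kw_nn], where M="?M"] by (auto intro: antisym)
  then have "AE z in ?M. Kf w z = 0"
    using integral_nonneg_eq_0_iff_AE[OF conjunct1[OF Fw] AE_I2[OF Kw_nn]] by auto
  then have Kw0: "AE \<alpha> in lebesgue. AE \<beta> in lebesgue. Kf w (\<alpha>, \<beta>) = 0"
    using P.AE_pair by fastforce
  define E where "E = {\<alpha> \<in> {0..pi}. norm (\<gamma> \<alpha>) < 1}"
  have Em[measurable]: "E \<in> sets lebesgue"
  proof -
    have "E = {\<alpha> \<in> space lebesgue. 0 \<le> \<alpha> \<and> \<alpha> \<le> pi \<and> norm (\<gamma> \<alpha>) < 1}" by (auto simp: E_def)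
    also have "\<dots> \<in> sets lebesgue" by measurable
    finally show ?thesis .
  qed
  have sing: "AE \<alpha> in lebesgue. AE \<beta> in lebesgue. \<beta> \<noteq> \<alpha> \<and> \<beta> \<noteq> \<alpha> + pi"
  proof (rule AE_I2)
    fix \<alpha> :: real
    assume "\<alpha> \<in> space lebesgue"
    show "AE \<beta> in lebesgue. \<beta> \<noteq> \<alpha> \<and> \<beta> \<noteq> \<alpha> + pi"
      using AE_completion[OF AE_lborel_singleton[of \<alpha>]] AE_completion[OF AE_lborel_singleton[of "\<alpha> + pi"]]
      by eventually_elim auto
  qed
  have A: "AE \<alpha> in lebesgue. AE \<beta> in lebesgue. (\<alpha> \<in> E \<and> \<beta> \<in> E \<longrightarrow> \<beta> < \<alpha>)"
    using Kw0 hq sing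
  proof eventually_elim
    case (elim \<alpha>)
    from elim(1,2,3) show ?case
    proof eventually_elim
      case (elim \<beta>)
      show ?case
      proof (rule impI, rule ccontr)
        assume in2: "\<alpha> \<in> E \<and> \<beta> \<in> E" and "\<not> \<beta> < \<alpha>"
        then have ab: "0 \<le> \<alpha>" "\<alpha> < \<beta>" "\<beta> \<le> pi" using elim(3) by (auto simp: E_def)
        have "0 < sin (\<beta> - \<alpha>)" using ab elim(3) by (intro sin_gt_zero) auto
        moreover have "0 < phi \<alpha>" "0 < phi \<beta>" using in2 by (auto simp: E_def phi_def)
        ultimately have "0 < phi \<alpha> * phi \<beta> * sin (\<beta> - \<alpha>) * q (\<alpha>, \<beta>)" using elim(2) by simp
        moreover have "Kf w (\<alpha>, \<beta>) = phi \<alpha> * phi \<beta> * sin (\<beta> - \<alpha>) * q (\<alpha>, \<beta>)"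
          using ab by (simp add: Kf_def crossw indicator_def)
        ultimately show False using elim(1) by simp
      qed
    qed
  qed
  have predm: "{x \<in> space ?M. fst x \<in> E \<and> snd x \<in> E \<longrightarrow> snd x < fst x} \<in> sets ?M"
    by measurable
  have B: "AE \<beta> in lebesgue. AE \<alpha> in lebesgue. (\<alpha> \<in> E \<and> \<beta> \<in> E \<longrightarrow> \<beta> < \<alpha>)"
    using A P.AE_commute[OF predm] by simp
  have "AE \<alpha> in lebesgue. \<alpha> \<in> E \<longrightarrow> (AE \<beta> in lebesgue. \<beta> \<notin> E)"
    using A B
  proof eventually_elim
    case (elim \<alpha>)
    show ?case
    proof
      assume aE: "\<alpha> \<in> E"
      from elim(1) elim(2) show "AE \<beta> in lebesgue. \<beta> \<notin> E"
        by eventually_elim (use aE in auto)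
    qed
  qed
  note X = this
  have Enull: "AE \<alpha> in lebesgue. \<alpha> \<notin> E"
  proof (cases "AE \<beta> in lebesgue. \<beta> \<notin> E")
    case True
    then show ?thesis by simp
  next
    case False
    from X show ?thesis by eventually_elim (use False in auto)
  qed
  have base: "AE \<alpha> in lebesgue. \<alpha> \<in> {0..pi} \<longrightarrow> norm (\<gamma> \<alpha>) = 1"
    using Enull gn by eventually_elim (auto simp: E_def)
  have D: "AE \<alpha> in lebesgue. (norm (\<gamma> (\<alpha> + pi)) = 1) = (norm (\<gamma> \<alpha>) = 1)"
    using anti by eventually_elim simp
  from periodic_AE[OF base D] notAE show False by simp
qed

end
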